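(* Let $k,n$ be positive integers. A graph $G$ with $n$ vertices satisfies $\kappa'(G)=\tau(G)=k$ if and only if $G$ has an edge-cut of size $k$ and a spanning subgraph belonging to $\mathcal{F}_{k,n}$.
   Context: Graphs are finite, loopless, possibly with multiple edges. $\kappa'(G)$ is the edge connectivity; $\tau(G)$ is the maximum number of edge-disjoint spanning trees of a connected graph $G$. An edge-cut is a minimal set of edges whose removal increases the number of components. For $n>1$, $\mathcal{F}_{k,n}$ is the set of graphs $G$ on $n$ vertices with $\kappa'(G)=\tau(G)=k$ whose number of edges is minimum among all graphs on $n$ vertices with $\kappa'=\tau=k$. *)

theory Defs
  imports Main
begin

text \<open>A finite loopless multigraph is given by a vertex set V, an edge set E of
edge identifiers, and an endpoint map assigning each edge its 2-element set of ends.\<close>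

definition multigraph :: "'v set \<Rightarrow> 'e set \<Rightarrow> ('e \<Rightarrow> 'v set) \<Rightarrow> bool" where
  "multigraph V E ends \<longleftrightarrow> finite V \<and> finite E \<and>
     (\<forall>e\<in>E. ends e \<subseteq> V \<and> card (ends e) = 2)"

definition adj :: "'e set \<Rightarrow> ('e \<Rightarrow> 'v set) \<Rightarrow> 'v \<Rightarrow> 'v \<Rightarrow> bool" where
  "adj E ends x y \<longleftrightarrow> (\<exists>e\<in>E. ends e = {x, y})"

definition reach :: "'e set \<Rightarrow> ('e \<Rightarrow> 'v set) \<Rightarrow> 'v \<Rightarrow> 'v \<Rightarrow> bool" where
  "reach E ends = (adj E ends)\<^sup>*\<^sup>*"

definition connected_graph :: "'v set \<Rightarrow> 'e set \<Rightarrow> ('e \<Rightarrow> 'v set) \<Rightarrow> bool" where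
  "connected_graph V E ends \<longleftrightarrow> V \<noteq> {} \<and> (\<forall>u\<in>V. \<forall>v\<in>V. reach E ends u v)"

definition num_components :: "'v set \<Rightarrow> 'e set \<Rightarrow> ('e \<Rightarrow> 'v set) \<Rightarrow> nat" where
  "num_components V E ends = card ((\<lambda>v. {u\<in>V. reach E ends u v}) ` V)"

text \<open>Edge connectivity: least number of edges whose removal disconnects G
  (0 for graphs with at most one vertex and for disconnected graphs).\<close>
definition edge_connectivity :: "'v set \<Rightarrow> 'e set \<Rightarrow> ('e \<Rightarrow> 'v set) \<Rightarrow> nat" where
  "edge_connectivity V E ends =
     (if card V \<le> 1 then 0
      else (LEAST m. \<exists>S\<subseteq>E. card S = m \<and> \<not> connected_graph V (E - S) ends))"

text \<open>A spanning tree of (V,E): an edge set T \<subseteq> E such that (V,T) is connected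
  and acyclic, acyclicity expressed as: removing any edge of T disconnects (V,T)
  (i.e. a minimally connected spanning subgraph).\<close>
definition spanning_tree :: "'v set \<Rightarrow> 'e set \<Rightarrow> ('e \<Rightarrow> 'v set) \<Rightarrow> 'e set \<Rightarrow> bool" where
  "spanning_tree V E ends T \<longleftrightarrow> T \<subseteq> E \<and> connected_graph V T ends \<and>
     (\<forall>e\<in>T. \<not> connected_graph V (T - {e}) ends)"

definition tree_packing :: "'v set \<Rightarrow> 'e set \<Rightarrow> ('e \<Rightarrow> 'v set) \<Rightarrow> nat" where
  "tree_packing V E ends =
     (if card V \<le> 1 then 0
      else (GREATEST m. \<exists>f :: nat \<Rightarrow> 'e set.
              (\<forall>i<m. spanning_tree V E ends (f i)) \<and>
              (\<forall>i<m. \<forall>j<m. i \<noteq> j \<longrightarrow> f i \<inter> f j = {})))"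

definition edge_cut :: "'v set \<Rightarrow> 'e set \<Rightarrow> ('e \<Rightarrow> 'v set) \<Rightarrow> 'e set \<Rightarrow> bool" where
  "edge_cut V E ends S \<longleftrightarrow> S \<subseteq> E \<and>
     num_components V (E - S) ends > num_components V E ends \<and>
     (\<forall>S'. S' \<subset> S \<longrightarrow> \<not> num_components V (E - S') ends > num_components V E ends)"

text \<open>Since everything is isomorphism invariant, it suffices to range over graphs
  with vertices and edge identifiers taken from nat.\<close>
definition min_edges_F :: "nat \<Rightarrow> nat \<Rightarrow> nat" where
  "min_edges_F k n = (LEAST m. \<exists>(V::nat set) (E::nat set) ends.
      multigraph V E ends \<and> card V = n \<and> card E = m \<and>
      edge_connectivity V E ends = k \<and> tree_packing V E ends = k)"

definition in_F :: "nat \<Rightarrow> nat \<Rightarrow> 'v set \<Rightarrow> 'e set \<Rightarrow> ('e \<Rightarrow> 'v set) \<Rightarrow> bool" where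
  "in_F k n V E ends \<longleftrightarrow> multigraph V E ends \<and> card V = n \<and>
     edge_connectivity V E ends = k \<and> tree_packing V E ends = k \<and>
     card E = min_edges_F k n"

end

theory Submission
  imports Defs
begin

lemma adj_sym: "adj F ends x y \<Longrightarrow> adj F ends y x"
  by (auto simp: adj_def insert_commute)

lemma reach_refl[simp]: "reach F ends x x"
  by (simp add: reach_def)

lemma reach_trans: "reach F ends x y \<Longrightarrow> reach F ends y z \<Longrightarrow> reach F ends x z"
  unfolding reach_def by (rule rtranclp_trans)

lemma reach_sym: "reach F ends x y \<Longrightarrow> reach F ends y x"
  unfolding reach_def
proof (induction rule: rtranclp.induct)
  case (rtrancl_refl a) then show ?case by simp
next
  case (rtrancl_into_rtrancl a b c)
  then show ?case by (meson adj_sym converse_rtranclp_into_rtranclp)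
qed

lemma reach_adj: "adj F ends x y \<Longrightarrow> reach F ends x y"
  unfolding reach_def by simp

lemma reach_mono: assumes sub: "F \<subseteq> F'" shows "reach F ends x y \<Longrightarrow> reach F' ends x y"
  unfolding reach_def
proof (induction rule: rtranclp.induct)
  case (rtrancl_refl a) then show ?case by simp
next
  case (rtrancl_into_rtrancl a b c)
  then have "adj F' ends b c" using sub unfolding adj_def by blast
  then show ?case using rtrancl_into_rtrancl by (meson rtranclp.rtrancl_into_rtrancl)
qed

lemma connected_mono: "connected_graph V F ends \<Longrightarrow> F \<subseteq> F' \<Longrightarrow> connected_graph V F' ends"
  unfolding connected_graph_def using reach_mono by metis

lemma reach_insert:
  assumes e: "ends e = {a,b}"
  shows "reach (insert e F) ends u v \<longleftrightarrow> reach F ends u v \<or> (reach F ends u a \<and> reach F ends b v)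
          \<or> (reach F ends u b \<and> reach F ends a v)" (is "?L \<longleftrightarrow> ?R u v")
proof
  assume "?L"
  then show "?R u v" unfolding reach_def[of "insert e F"]
  proof (induction rule: rtranclp.induct)
    case (rtrancl_refl x) then show ?case by simp
  next
    case (rtrancl_into_rtrancl x y z)
    from rtrancl_into_rtrancl(2) obtain e' where e': "e' \<in> insert e F" "ends e' = {y,z}"
      by (auto simp: adj_def)
    show ?case
    proof (cases "e' = e")
      case True
      then have "{a,b} = {y,z}" using e e' by simp
      then have "(y = a \<and> z = b) \<or> (y = b \<and> z = a)" by (simp only: doubleton_eq_iff) blast
      then show ?thesis using rtrancl_into_rtrancl(3) by auto
    next
      case False
      then have "reach F ends y z" using e' by (intro reach_adj) (auto simp: adj_def)
      then show ?thesis using rtrancl_into_rtrancl(3) by (meson reach_trans)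
    qed
  qed
next
  have ab: "reach (insert e F) ends a b" "reach (insert e F) ends b a"
    using e by (auto simp: adj_def intro!: reach_adj)
  assume "?R u v"
  then show ?L
    by (meson ab reach_mono reach_trans subset_insertI)
qed

lemma reach_insert_eq:
  assumes e: "ends e = {a,b}" and r: "reach F ends a b"
  shows "reach (insert e F) ends = reach F ends"
proof (intro ext)
  fix u v
  have ba: "reach F ends b a" using r by (rule reach_sym)
  show "reach (insert e F) ends u v = reach F ends u v"
    unfolding reach_insert[where ends=ends and e=e, OF e]
    using r ba by (meson reach_trans)
qed


definition cls :: "'v set \<Rightarrow> 'e set \<Rightarrow> ('e \<Rightarrow> 'v set) \<Rightarrow> 'v \<Rightarrow> 'v set" where
  "cls V F ends v = {u\<in>V. reach F ends u v}"

lemma nc_def': "num_components V F ends = card (cls V F ends ` V)"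
  by (simp add: num_components_def cls_def)

lemma comp_eq:
  assumes "x \<in> V" "y \<in> V"
  shows "cls V F ends x = cls V F ends y \<longleftrightarrow> reach F ends x y"
proof
  assume "cls V F ends x = cls V F ends y"
  moreover have "x \<in> cls V F ends x" using assms by (simp add: cls_def)
  ultimately show "reach F ends x y" by (simp add: cls_def)
next
  assume r: "reach F ends x y"
  show "cls V F ends x = cls V F ends y"
    unfolding cls_def using r by (meson reach_sym reach_trans)
qed

lemma nc_insert_same: assumes "ends e = {a,b}" "reach F ends a b"
  shows "num_components V (insert e F) ends = num_components V F ends"
  unfolding num_components_def reach_insert_eq[OF assms] ..

lemma nc_insert_bridge:
  assumes fin: "finite V" and V: "a \<in> V" "b \<in> V" and e: "ends e = {a,b}"
    and nr: "\<not> reach F ends a b"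
  shows "num_components V (insert e F) ends + 1 = num_components V F ends"
proof -
  let ?C = "cls V F ends" and ?D = "cls V (insert e F) ends"
  define R where "R = ?C ` V - {?C a, ?C b}"
  have RI: "reach (insert e F) ends u v \<longleftrightarrow> reach F ends u v \<or> (reach F ends u a \<and> reach F ends b v)
       \<or> (reach F ends u b \<and> reach F ends a v)" for u v
    using reach_insert[where ends=ends and e=e, OF e] .
  have Cab: "?C a \<noteq> ?C b" using comp_eq[OF V, of F ends] nr by blast
  have C1: "?C ` V = insert (?C a) (insert (?C b) R)" using V by (auto simp: R_def)
  have D1: "?D v = ?C a \<union> ?C b" if "reach F ends v a \<or> reach F ends v b" for v
  proof (rule set_eqI)
    fix u
    show "u \<in> ?D v \<longleftrightarrow> u \<in> ?C a \<union> ?C b"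
      unfolding cls_def RI using that nr by (auto dest: reach_sym intro: reach_trans)
  qed
  have D2: "?D v = ?C v" if "\<not> reach F ends v a" "\<not> reach F ends v b" for v
  proof (rule set_eqI)
    fix u
    show "u \<in> ?D v \<longleftrightarrow> u \<in> ?C v"
      unfolding cls_def RI using that nr by (auto dest: reach_sym intro: reach_trans)
  qed
  have C2: "?D ` V = insert (?C a \<union> ?C b) R"
  proof
    show "?D ` V \<subseteq> insert (?C a \<union> ?C b) R"
    proof
      fix X assume "X \<in> ?D ` V"
      then obtain v where v: "v \<in> V" "X = ?D v" by blast
      show "X \<in> insert (?C a \<union> ?C b) R"
      proof (cases "reach F ends v a \<or> reach F ends v b")
        case True then show ?thesis using D1 v by simp
      next
        case False
        then have "?C v \<noteq> ?C a" "?C v \<noteq> ?C b" using comp_eq[OF v(1) V(1), of F ends] comp_eq[OF v(1) V(2), of F ends] by auto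
        then show ?thesis using D2 False v by (auto simp: R_def)
      qed
    qed
  next
    show "insert (?C a \<union> ?C b) R \<subseteq> ?D ` V"
    proof
      fix X assume "X \<in> insert (?C a \<union> ?C b) R"
      then consider "X = ?C a \<union> ?C b" | "X \<in> R" by blast
      then show "X \<in> ?D ` V"
      proof cases
        case 1 then show ?thesis using D1[of a] V by auto
      next
        case 2
        then obtain v where v: "v \<in> V" "X = ?C v" "?C v \<noteq> ?C a" "?C v \<noteq> ?C b" by (auto simp: R_def)
        then have "\<not> reach F ends v a" "\<not> reach F ends v b" using comp_eq[OF v(1) V(1), of F ends] comp_eq[OF v(1) V(2), of F ends] by auto
        then have "X = ?D v" using D2 v(2) by simp
        then show ?thesis using v(1) by blast
      qed
    qed
  qed
  have C3: "?C a \<union> ?C b \<notin> R"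
  proof
    assume "?C a \<union> ?C b \<in> R"
    then obtain v where v: "v \<in> V" "?C a \<union> ?C b = ?C v" "?C v \<noteq> ?C a" by (auto simp: R_def)
    have "a \<in> ?C a" using V by (simp add: cls_def)
    then have "a \<in> ?C v" using v(2) by blast
    then have "reach F ends a v" by (simp add: cls_def)
    then show False using comp_eq[OF V(1) v(1), of F ends] v(3) by auto
  qed
  have fR: "finite R" using fin by (simp add: R_def)
  have "num_components V F ends = card R + 2"
    unfolding nc_def' C1 using fR Cab by (simp add: R_def)
  moreover have "num_components V (insert e F) ends = card R + 1"
    unfolding nc_def' C2 using fR C3 by simp
  ultimately show ?thesis by simp
qed


lemma reach_empty: "reach {} ends u v \<longleftrightarrow> u = v"
proof -
  have "adj {} ends = (\<lambda>x y. False)" by (intro ext) (simp add: adj_def)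
  then show ?thesis by (auto simp: reach_def elim: converse_rtranclpE)
qed

lemma nc_empty: "num_components V {} ends = card V"
proof -
  have "(\<lambda>v. {u\<in>V. reach {} ends u v}) ` V = (\<lambda>v. {v}) ` V"
    by (auto simp: reach_empty)
  then show ?thesis unfolding num_components_def by (simp add: card_image)
qed

lemma nc_ge1: "finite V \<Longrightarrow> V \<noteq> {} \<Longrightarrow> num_components V F ends \<ge> 1"
  unfolding num_components_def by (simp add: Suc_le_eq card_gt_0_iff)

lemma conn_iff:
  assumes "finite V" "V \<noteq> {}"
  shows "connected_graph V F ends \<longleftrightarrow> num_components V F ends = 1"
proof
  assume c: "connected_graph V F ends"
  have "cls V F ends ` V = {V}"
  proof -
    have "cls V F ends v = V" if "v \<in> V" for v
      using c that unfolding cls_def connected_graph_def by auto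
    then show ?thesis using assms(2) by auto
  qed
  then show "num_components V F ends = 1" by (simp add: nc_def')
next
  assume "num_components V F ends = 1"
  then obtain X where X: "cls V F ends ` V = {X}" by (auto simp: nc_def' card_Suc_eq)
  show "connected_graph V F ends" unfolding connected_graph_def
  proof (intro conjI ballI)
    fix u v assume uv: "u \<in> V" "v \<in> V"
    then have "cls V F ends u = cls V F ends v" using X by blast
    then show "reach F ends u v" using comp_eq[OF uv] by blast
  qed (use assms in auto)
qed

lemma edge2: assumes "card (ends e) = 2" obtains a b where "ends e = {a,b}" "a \<noteq> b"
  using assms by (auto simp: card_2_iff)

lemma nc_step:
  assumes "finite V" "ends e \<subseteq> V" "card (ends e) = 2"
  shows "num_components V F ends \<le> num_components V (insert e F) ends + 1"
proof -
  obtain a b where ab: "ends e = {a,b}" using edge2[of ends e] assms(3) by metis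
  have V: "a \<in> V" "b \<in> V" using ab assms(2) by auto
  show ?thesis
  proof (cases "reach F ends a b")
    case True then show ?thesis using nc_insert_same[OF ab True, of V] by simp
  next
    case False then show ?thesis using nc_insert_bridge[OF assms(1) V ab False] by simp
  qed
qed

lemma nc_lower:
  assumes "finite V" "finite F" "\<forall>e\<in>F. ends e \<subseteq> V \<and> card (ends e) = 2"
  shows "card V \<le> num_components V F ends + card F"
  using assms(2,3)
proof (induction F rule: finite_induct)
  case empty then show ?case by (simp add: nc_empty)
next
  case (insert e F)
  then have "num_components V F ends \<le> num_components V (insert e F) ends + 1"
    using nc_step[OF assms(1), of ends e F] by simp
  then show ?case using insert by simp
qed

lemma conn_card:
  assumes "finite V" "finite F" "\<forall>e\<in>F. ends e \<subseteq> V \<and> card (ends e) = 2"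
    and "connected_graph V F ends"
  shows "card V \<le> card F + 1"
proof -
  have "V \<noteq> {}" using assms(4) by (simp add: connected_graph_def)
  then show ?thesis using nc_lower[OF assms(1-3)] conn_iff[OF assms(1) \<open>V \<noteq> {}\<close>, of F ends] assms(4) by simp
qed

lemma tree_card:
  assumes fin: "finite V" "finite E" and wf: "\<forall>e\<in>E. ends e \<subseteq> V \<and> card (ends e) = 2"
    and st: "spanning_tree V E ends T"
  shows "card T + 1 = card V"
proof -
  have TE: "T \<subseteq> E" and cT: "connected_graph V T ends"
    and min: "\<forall>e\<in>T. \<not> connected_graph V (T - {e}) ends"
    using st by (auto simp: spanning_tree_def)
  have fT: "finite T" using TE fin(2) finite_subset by blast
  have Vne: "V \<noteq> {}" using cT by (simp add: connected_graph_def)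
  have c1: "num_components V T ends = 1" using conn_iff[OF fin(1) Vne, of T ends] cT by simp
  have "num_components V (T - S) ends = 1 + card S" if "S \<subseteq> T" for S
    using finite_subset[OF that fT] that
  proof (induction S rule: finite_subset_induct')
    case empty then show ?case by (simp add: c1)
  next
    case (insert e S')
    have eT: "e \<in> T" "e \<notin> S'" "finite S'" using insert by auto
    have c2: "card (ends e) = 2" using wf eT(1) TE by blast
    obtain a b where ab: "ends e = {a,b}" using edge2[of ends e, OF c2] by metis
    have V: "a \<in> V" "b \<in> V" using ab wf eT TE by auto
    let ?F0 = "T - insert e S'"
    have ins: "insert e ?F0 = T - S'" using eT by auto
    have nr: "\<not> reach ?F0 ends a b"
    proof
      assume "reach ?F0 ends a b"
      then have r: "reach (T - {e}) ends a b" by (rule reach_mono[rotated]) auto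
      have "insert e (T - {e}) = T" using eT by auto
      then have "reach T ends = reach (T - {e}) ends" using reach_insert_eq[OF ab r] by simp
      then have "connected_graph V (T - {e}) ends" using cT by (simp add: connected_graph_def)
      then show False using min eT by auto
    qed
    have "num_components V (insert e ?F0) ends + 1 = num_components V ?F0 ends"
      using nc_insert_bridge[OF fin(1) V ab nr] .
    then show ?case using insert ins eT by simp
  qed
  from this[of T] show ?thesis using nc_empty[of V ends] by simp
qed


lemma not_conn_empty:
  assumes "card V \<ge> 2" shows "\<not> connected_graph V {} ends"
proof
  assume c: "connected_graph V {} ends"
  have "finite V" using assms by (metis card.infinite not_numeral_le_zero)
  moreover have "\<not> card V \<le> Suc 0" using assms by simp
  ultimately obtain u v where "u \<in> V" "v \<in> V" "u \<noteq> v"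
    using card_le_Suc0_iff_eq by blast
  then show False using c by (auto simp: connected_graph_def reach_empty)
qed

lemma kappa_ex:
  assumes "card V \<ge> 2"
  shows "\<exists>S\<subseteq>E. card S = edge_connectivity V E ends \<and> \<not> connected_graph V (E - S) ends"
proof -
  have "\<exists>S\<subseteq>E. card S = card E \<and> \<not> connected_graph V (E - S) ends"
    using not_conn_empty[OF assms] by (intro exI[of _ E]) auto
  then have "\<exists>S\<subseteq>E. card S = (LEAST m. \<exists>S\<subseteq>E. card S = m \<and> \<not> connected_graph V (E - S) ends)
     \<and> \<not> connected_graph V (E - S) ends"
    by (rule LeastI[where P = "\<lambda>m. \<exists>S\<subseteq>E. card S = m \<and> \<not> connected_graph V (E - S) ends"])
  then show ?thesis using assms by (simp add: edge_connectivity_def)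
qed

lemma kappa_le:
  assumes "card V \<ge> 2" "S \<subseteq> E" "\<not> connected_graph V (E - S) ends"
  shows "edge_connectivity V E ends \<le> card S"
  using assms unfolding edge_connectivity_def by (auto intro!: Least_le)

definition packP :: "'v set \<Rightarrow> 'e set \<Rightarrow> ('e \<Rightarrow> 'v set) \<Rightarrow> nat \<Rightarrow> bool" where
  "packP V E ends m \<longleftrightarrow> (\<exists>f :: nat \<Rightarrow> 'e set.
              (\<forall>i<m. spanning_tree V E ends (f i)) \<and>
              (\<forall>i<m. \<forall>j<m. i \<noteq> j \<longrightarrow> f i \<inter> f j = {}))"

lemma tau_def': "card V \<ge> 2 \<Longrightarrow> tree_packing V E ends = (GREATEST m. packP V E ends m)"
  unfolding tree_packing_def packP_def by simp

lemma trees_le_cut: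
  assumes fin: "finite E" and P: "packP V E ends m" and S: "S \<subseteq> E" "\<not> connected_graph V (E - S) ends"
  shows "m \<le> card S"
proof -
  obtain f where f: "\<forall>i<m. spanning_tree V E ends (f i)"
    "\<forall>i<m. \<forall>j<m. i \<noteq> j \<longrightarrow> f i \<inter> f j = {}" using P by (auto simp: packP_def)
  have ne: "f i \<inter> S \<noteq> {}" if "i < m" for i
  proof
    assume "f i \<inter> S = {}"
    then have "f i \<subseteq> E - S" using f(1) that by (auto simp: spanning_tree_def)
    moreover have "connected_graph V (f i) ends" using f(1) that by (auto simp: spanning_tree_def)
    ultimately show False using S(2) connected_mono[of V "f i" ends "E - S"] by blast
  qed
  define g where "g i = (SOME x. x \<in> f i \<inter> S)" for i
  have g: "g i \<in> f i \<inter> S" if "i < m" for i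
    using ne[OF that] unfolding g_def by (metis all_not_in_conv someI_ex)
  have "inj_on g {..<m}"
  proof (rule inj_onI)
    fix i j assume "i \<in> {..<m}" "j \<in> {..<m}" "g i = g j"
    then have ij: "i < m" "j < m" "g i = g j" by auto
    show "i = j"
    proof (rule ccontr)
      assume "i \<noteq> j"
      then have "f i \<inter> f j = {}" using f(2) ij by blast
      moreover have "g i \<in> f i" "g i \<in> f j" using g[OF ij(1)] g[OF ij(2)] ij(3) by auto
      ultimately show False by blast
    qed
  qed
  moreover have "g ` {..<m} \<subseteq> S" using g by auto
  moreover have "finite S" using S(1) fin finite_subset by blast
  ultimately have "card {..<m} \<le> card S" by (rule card_inj_on_le)
  then show ?thesis by simp
qed

lemma packP0: "packP V E ends 0" by (simp add: packP_def)

lemma tau_props: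
  assumes fin: "finite E" and V2: "card V \<ge> 2"
  shows "packP V E ends (tree_packing V E ends)"
    and "packP V E ends m \<Longrightarrow> m \<le> tree_packing V E ends"
    and "tree_packing V E ends \<le> edge_connectivity V E ends"
proof -
  have bnd: "m \<le> card E" if "packP V E ends m" for m
    using trees_le_cut[OF fin that, of E] not_conn_empty[OF V2, of ends] by simp
  show P: "packP V E ends (tree_packing V E ends)"
    unfolding tau_def'[OF V2] by (rule GreatestI_nat[where P="packP V E ends", OF packP0 bnd])
  show "m \<le> tree_packing V E ends" if pm: "packP V E ends m"
    unfolding tau_def'[OF V2] by (rule Greatest_le_nat[where P="packP V E ends", OF pm bnd])
  obtain S where S: "S \<subseteq> E" "card S = edge_connectivity V E ends" "\<not> connected_graph V (E - S) ends"
    using kappa_ex[OF V2, of E ends] by metis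
  show "tree_packing V E ends \<le> edge_connectivity V E ends"
    using trees_le_cut[OF fin P S(1,3)] S(2) by simp
qed


lemma mg_props: "multigraph V E ends \<Longrightarrow> finite V \<and> finite E \<and> (\<forall>e\<in>E. ends e \<subseteq> V \<and> card (ends e) = 2)"
  by (simp add: multigraph_def)

lemma mg_sub: "multigraph V E ends \<Longrightarrow> E' \<subseteq> E \<Longrightarrow> multigraph V E' ends"
  unfolding multigraph_def by (blast intro: finite_subset)

lemma V2_of_kappa: assumes "edge_connectivity V E ends \<ge> 1" shows "card V \<ge> 2"
proof (rule ccontr)
  assume "\<not> 2 \<le> card V"
  then have "card V \<le> 1" by simp
  then show False using assms by (simp add: edge_connectivity_def)
qed

lemma V2_of_tau: assumes "tree_packing V E ends \<ge> 1" shows "card V \<ge> 2"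
proof (rule ccontr)
  assume "\<not> 2 \<le> card V"
  then have "card V \<le> 1" by simp
  then show False using assms by (simp add: tree_packing_def)
qed

lemma packP_mono: assumes "packP V E' ends m" "E' \<subseteq> E" shows "packP V E ends m"
proof -
  obtain f where f: "\<forall>i<m. spanning_tree V E' ends (f i)" "\<forall>i<m. \<forall>j<m. i\<noteq>j \<longrightarrow> f i \<inter> f j = {}"
    using assms(1) unfolding packP_def by blast
  have "\<forall>i<m. spanning_tree V E ends (f i)" using f(1) assms(2) unfolding spanning_tree_def by blast
  then show ?thesis unfolding packP_def using f(2) by blast
qed

lemma union_trees:
  assumes mg: "multigraph V E ends" and V2: "card V \<ge> 2"
    and f: "\<forall>i<k. spanning_tree V E ends (f i)" "\<forall>i<k. \<forall>j<k. i \<noteq> j \<longrightarrow> f i \<inter> f j = {}"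
  shows "(\<Union>i<k. f i) \<subseteq> E" and "card (\<Union>i<k. f i) = k * (card V - 1)"
    and "packP V (\<Union>i<k. f i) ends k"
proof -
  have P: "finite V" "finite E" "\<forall>e\<in>E. ends e \<subseteq> V \<and> card (ends e) = 2" using mg_props[OF mg] by auto
  show sub: "(\<Union>i<k. f i) \<subseteq> E" using f(1) by (auto simp: spanning_tree_def)
  have c: "card (f i) = card V - 1" if "i < k" for i
    using tree_card[OF P, of "f i"] f(1) that by auto
  have fi: "finite (f i)" if "i < k" for i
  proof -
    have "f i \<subseteq> E" using f(1) that by (auto simp: spanning_tree_def)
    then show ?thesis using P(2) by (rule finite_subset)
  qed
  have "card (\<Union>i<k. f i) = (\<Sum>i<k. card (f i))"
    by (rule card_UN_disjoint) (use fi f(2) in auto)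
  also have "\<dots> = (\<Sum>i<k. card V - 1)" using c by simp
  finally show "card (\<Union>i<k. f i) = k * (card V - 1)" by simp
  show "packP V (\<Union>i<k. f i) ends k"
    unfolding packP_def
  proof (intro exI[of _ f] conjI allI impI)
    fix i assume "i < k"
    then show "spanning_tree V (\<Union>i<k. f i) ends (f i)" using f(1) by (auto simp: spanning_tree_def)
  qed (use f(2) in auto)
qed

lemma min_edges_lower:
  assumes "k \<ge> 1" "multigraph V E ends" "tree_packing V E ends = k"
  shows "k * (card V - 1) \<le> card E"
proof -
  have V2: "card V \<ge> 2" using V2_of_tau[of V E ends] assms by simp
  have finE: "finite E" using assms(2) by (simp add: multigraph_def)
  obtain f where f: "\<forall>i<k. spanning_tree V E ends (f i)"
      "\<forall>i<k. \<forall>j<k. i \<noteq> j \<longrightarrow> f i \<inter> f j = {}"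
      using tau_props(1)[OF finE V2, of ends] assms(3) by (auto simp: packP_def)
  have "(\<Union>i<k. f i) \<subseteq> E" "card (\<Union>i<k. f i) = k * (card V - 1)"
    using union_trees[OF assms(2) V2 f] by auto
  then show ?thesis using card_mono[OF finE] by metis
qed

lemma reach_path:
  assumes "\<And>j. j < m \<Longrightarrow> adj F ends j (Suc j)"
  shows "j \<le> m \<Longrightarrow> reach F ends 0 j"
proof (induction j)
  case 0 then show ?case by simp
next
  case (Suc j)
  then have "reach F ends 0 j" by simp
  moreover have "reach F ends j (Suc j)" using assms Suc.prems by (intro reach_adj) simp
  ultimately show ?case by (rule reach_trans)
qed

lemma example_graph:
  assumes k: "k \<ge> 1" and n: "n \<ge> 2"
  shows "\<exists>(V::nat set) (E::nat set) ends. multigraph V E ends \<and> card V = n \<and> card E = k * (n - 1) \<and>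
      edge_connectivity V E ends = k \<and> tree_packing V E ends = k"
proof -
  define p where "p = n - 1"
  have p: "p \<ge> 1" "n = Suc p" using n by (auto simp: p_def)
  define V0 where "V0 = {..<n}"
  define E0 where "E0 = {..<k*p}"
  define ends0 where "ends0 = (\<lambda>e::nat. {e mod p, Suc (e mod p)})"
  have cV: "card V0 = n" by (simp add: V0_def)
  have V2: "card V0 \<ge> 2" using cV n by simp
  have finV: "finite V0" by (simp add: V0_def)
  have finE: "finite E0" by (simp add: E0_def)
  have modp: "e mod p < p" for e using p by simp
  have wf: "\<forall>e\<in>E0. ends0 e \<subseteq> V0 \<and> card (ends0 e) = 2"
  proof
    fix e assume "e \<in> E0"
    have "e mod p < p" by (rule modp)
    then show "ends0 e \<subseteq> V0 \<and> card (ends0 e) = 2" by (auto simp: ends0_def V0_def p(2))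
  qed
  have mg: "multigraph V0 E0 ends0" unfolding multigraph_def using finV finE wf by blast
  define f where "f i = {i*p..<i*p+p}" for i
  have fE: "f i \<subseteq> E0" if "i < k" for i
  proof -
    have "i*p + p \<le> k*p" using that by (metis add.commute less_eq_Suc_le mult_Suc mult_le_mono1)
    then show ?thesis by (auto simp: f_def E0_def)
  qed
  have disj: "f i \<inter> f j = {}" if "i \<noteq> j" for i j
  proof -
    have "i*p + p \<le> j*p \<or> j*p + p \<le> i*p"
    proof (cases "i < j")
      case True then show ?thesis by (metis add.commute less_eq_Suc_le mult_Suc mult_le_mono1)
    next
      case False then have "j < i" using that by simp
      then show ?thesis by (metis add.commute less_eq_Suc_le mult_Suc mult_le_mono1)
    qed
    then show ?thesis by (auto simp: f_def)
  qed
  have cf: "card (f i) = p" for i by (simp add: f_def)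
  have conn: "connected_graph V0 (f i) ends0" for i
  proof -
    have "adj (f i) ends0 j (Suc j)" if "j < p" for j
    proof -
      have "(i*p + j) mod p = j" using that by simp
      then have "ends0 (i*p+j) = {j, Suc j}" by (simp add: ends0_def)
      moreover have "i*p+j \<in> f i" using that by (simp add: f_def)
      ultimately show ?thesis unfolding adj_def by blast
    qed
    then have r: "reach (f i) ends0 0 j" if "j \<le> p" for j using reach_path that by blast
    show ?thesis unfolding connected_graph_def
    proof (intro conjI ballI)
      show "V0 \<noteq> {}" using n unfolding V0_def by (metis lessThan_empty_iff not_numeral_le_zero)
      fix u v assume "u \<in> V0" "v \<in> V0"
      then have "u \<le> p" "v \<le> p" using p by (auto simp: V0_def)
      then show "reach (f i) ends0 u v" using r reach_sym reach_trans by metis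
    qed
  qed
  have st: "spanning_tree V0 E0 ends0 (f i)" if "i < k" for i
    unfolding spanning_tree_def
  proof (intro conjI ballI)
    show "f i \<subseteq> E0" using fE[OF that] .
    show "connected_graph V0 (f i) ends0" by (rule conn)
    fix e assume e: "e \<in> f i"
    show "\<not> connected_graph V0 (f i - {e}) ends0"
    proof
      assume c: "connected_graph V0 (f i - {e}) ends0"
      have sub: "f i - {e} \<subseteq> E0" using fE[OF that] by blast
      have "card V0 \<le> card (f i - {e}) + 1"
        by (rule conn_card[OF finV finite_subset[OF sub finE]]) (use wf sub c in auto)
      moreover have "card (f i - {e}) = p - 1" using e cf[of i] by (simp add: f_def)
      ultimately show False using cV p by simp
    qed
  qed
  have P: "packP V0 E0 ends0 k" unfolding packP_def using st disj by blast
  have t1: "k \<le> tree_packing V0 E0 ends0" using tau_props(2)[OF finE V2 P] .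
  have t2: "tree_packing V0 E0 ends0 \<le> edge_connectivity V0 E0 ends0" using tau_props(3)[OF finE V2] .
  define S0 where "S0 = (\<lambda>i. i*p) ` {..<k}"
  have S0E: "S0 \<subseteq> E0" using p by (auto simp: S0_def E0_def)
  have cS0: "card S0 = k" unfolding S0_def using p by (subst card_image) (auto simp: inj_on_def)
  have no0: "x \<noteq> 0" if a: "adj (E0 - S0) ends0 x y" for x y
  proof
    assume x0: "x = 0"
    obtain e where e: "e \<in> E0" "e \<notin> S0" "ends0 e = {x, y}" using a unfolding adj_def by blast
    have "0 \<in> ends0 e" using e(3) x0 by simp
    then have "e mod p = 0" by (simp add: ends0_def)
    then have "e = (e div p) * p" by (metis add.right_neutral mult.commute mult_div_mod_eq)
    moreover have "e div p < k" using e(1) p by (simp add: E0_def less_mult_imp_div_less)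
    ultimately have "e \<in> S0" unfolding S0_def by blast
    then show False using e(2) by simp
  qed
  have "\<not> reach (E0 - S0) ends0 0 1"
  proof
    assume "reach (E0 - S0) ends0 0 1"
    then show False unfolding reach_def
      by (rule converse_rtranclpE) (use no0 in auto)
  qed
  then have "\<not> connected_graph V0 (E0 - S0) ends0" using n by (auto simp: connected_graph_def V0_def)
  then have t3: "edge_connectivity V0 E0 ends0 \<le> k" using kappa_le[OF V2 S0E] cS0 by simp
  have "multigraph V0 E0 ends0 \<and> card V0 = n \<and> card E0 = k * (n - 1) \<and>
      edge_connectivity V0 E0 ends0 = k \<and> tree_packing V0 E0 ends0 = k"
    using mg cV t1 t2 t3 by (simp add: E0_def p_def)
  then show ?thesis by blast
qed

lemma min_edges: assumes "k \<ge> 1" "n \<ge> 2" shows "min_edges_F k n = k * (n - 1)"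
proof -
  let ?P = "\<lambda>m. \<exists>(V::nat set) (E::nat set) ends.
      multigraph V E ends \<and> card V = n \<and> card E = m \<and>
      edge_connectivity V E ends = k \<and> tree_packing V E ends = k"
  have ex: "?P (k * (n - 1))" using example_graph[OF assms] by blast
  have le: "Least ?P \<le> k * (n - 1)" by (rule Least_le) (rule ex)
  have "?P (Least ?P)" by (rule LeastI) (rule ex)
  then obtain V :: "nat set" and E :: "nat set" and ends where
    G: "multigraph V E ends" "card V = n" "card E = Least ?P" "tree_packing V E ends = k" by blast
  have "k * (n - 1) \<le> Least ?P" using min_edges_lower[OF assms(1) G(1) G(4)] G(2,3) by simp
  then show ?thesis unfolding min_edges_F_def using le by simp
qed

theorem theorem4p4:
  fixes V :: "'v set" and E :: "'e set" and ends :: "'e \<Rightarrow> 'v set" and k n :: nat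
  assumes "k \<ge> 1" and "n \<ge> 1"
    and "multigraph V E ends" and "card V = n"
  shows "(edge_connectivity V E ends = k \<and> tree_packing V E ends = k) \<longleftrightarrow>
         ((\<exists>S. edge_cut V E ends S \<and> card S = k) \<and>
          (\<exists>E'. E' \<subseteq> E \<and> in_F k n V E' ends))"
proof -
  note mg = assms(3)
  have finV: "finite V" and finE: "finite E" and wf: "\<forall>e\<in>E. ends e \<subseteq> V \<and> card (ends e) = 2"
    using mg_props[OF mg] by auto
  show ?thesis
  proof
    assume h: "edge_connectivity V E ends = k \<and> tree_packing V E ends = k"
    have V2: "card V \<ge> 2" using V2_of_kappa[of V E ends] h assms(1) by simp
    have Vne: "V \<noteq> {}" using V2 by auto
    have conn: "connected_graph V E ends"
    proof (rule ccontr)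
      assume "\<not> connected_graph V E ends"
      then have "edge_connectivity V E ends \<le> card {}" using kappa_le[OF V2, of "{}" E ends] by simp
      then show False using h assms(1) by simp
    qed
    obtain S where S: "S \<subseteq> E" "card S = edge_connectivity V E ends" "\<not> connected_graph V (E - S) ends"
      using kappa_ex[OF V2, of E ends] by blast
    have "card S = k" using S(2) h by simp
    note S = S(1) this S(3)
    have nc1: "num_components V E ends = 1" using conn_iff[OF finV Vne, of E ends] conn by simp
    have "edge_cut V E ends S"
      unfolding edge_cut_def
    proof (intro conjI allI impI)
      show "S \<subseteq> E" by fact
      have "num_components V (E - S) ends \<noteq> 1" using conn_iff[OF finV Vne, of "E - S" ends] S(3) by simp
      then show "num_components V (E - S) ends > num_components V E ends"
        using nc_ge1[OF finV Vne, of "E - S" ends] nc1 by simp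
      fix S' assume S': "S' \<subset> S"
      have fS: "finite S" using S(1) finE by (rule finite_subset)
      have lt: "card S' < card S" using psubset_card_mono[OF fS S'] .
      have "connected_graph V (E - S') ends"
      proof (rule ccontr)
        assume "\<not> connected_graph V (E - S') ends"
        moreover have "S' \<subseteq> E" using S' S(1) by blast
        ultimately have "edge_connectivity V E ends \<le> card S'" using kappa_le[OF V2, of S' E ends] by blast
        then show False using lt S(2) h by simp
      qed
      then show "\<not> num_components V (E - S') ends > num_components V E ends"
        using conn_iff[OF finV Vne, of "E - S'" ends] nc1 by simp
    qed
    then have cut: "\<exists>S. edge_cut V E ends S \<and> card S = k" using S(2) by blast
    obtain f where f: "\<forall>i<k. spanning_tree V E ends (f i)"
      "\<forall>i<k. \<forall>j<k. i \<noteq> j \<longrightarrow> f i \<inter> f j = {}"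
      using tau_props(1)[OF finE V2, of ends] h by (auto simp: packP_def)
    define H where "H = (\<Union>i<k. f i)"
    have HE: "H \<subseteq> E" and cH: "card H = k * (card V - 1)" and pH: "packP V H ends k"
      using union_trees[OF mg V2 f] unfolding H_def by auto
    have mgH: "multigraph V H ends" using mg_sub[OF mg HE] .
    have finH: "finite H" using HE finE finite_subset by blast
    have t1: "k \<le> tree_packing V H ends" using tau_props(2)[OF finH V2 pH] .
    have t2: "tree_packing V H ends \<le> edge_connectivity V H ends" using tau_props(3)[OF finH V2] .
    have "\<not> connected_graph V (H - S \<inter> H) ends"
    proof
      assume "connected_graph V (H - S \<inter> H) ends"
      then have "connected_graph V (E - S) ends" by (rule connected_mono) (use HE in auto)
      then show False using S(3) by simp
    qed
    then have "edge_connectivity V H ends \<le> card (S \<inter> H)" using kappa_le[OF V2, of "S \<inter> H" H ends] by simp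
    also have "\<dots> \<le> card S"
    proof (rule card_mono)
      show "finite S" using S(1) finE by (rule finite_subset)
    qed auto
    finally have t3: "edge_connectivity V H ends \<le> k" using S(2) by simp
    have "in_F k n V H ends"
      unfolding in_F_def using mgH t1 t2 t3 cH assms(4) min_edges[OF assms(1)] V2 by auto
    then show "(\<exists>S. edge_cut V E ends S \<and> card S = k) \<and> (\<exists>E'. E' \<subseteq> E \<and> in_F k n V E' ends)"
      using cut HE by blast
  next
    assume "(\<exists>S. edge_cut V E ends S \<and> card S = k) \<and> (\<exists>E'. E' \<subseteq> E \<and> in_F k n V E' ends)"
    then obtain S E' where S: "edge_cut V E ends S" "card S = k" and E': "E' \<subseteq> E" "in_F k n V E' ends"
      by blast
    have kE': "edge_connectivity V E' ends = k" and tE': "tree_packing V E' ends = k"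
      using E'(2) by (auto simp: in_F_def)
    have V2: "card V \<ge> 2" using V2_of_kappa[of V E' ends] kE' assms(1) by simp
    have Vne: "V \<noteq> {}" using V2 by auto
    have finE': "finite E'" using E'(1) finE finite_subset by blast
    have "packP V E' ends k" using tau_props(1)[OF finE' V2, of ends] tE' by simp
    then have "packP V E ends k" using packP_mono E'(1) by blast
    then have t1: "k \<le> tree_packing V E ends" using tau_props(2)[OF finE V2] by blast
    have t2: "tree_packing V E ends \<le> edge_connectivity V E ends" using tau_props(3)[OF finE V2] .
    have SE: "S \<subseteq> E" using S(1) by (simp add: edge_cut_def)
    have "num_components V (E - S) ends > num_components V E ends" using S(1) by (simp add: edge_cut_def)
    then have "num_components V (E - S) ends \<noteq> 1" using nc_ge1[OF finV Vne, of E ends] by simp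
    then have "\<not> connected_graph V (E - S) ends" using conn_iff[OF finV Vne, of "E - S" ends] by simp
    then have t3: "edge_connectivity V E ends \<le> k" using kappa_le[OF V2 SE] S(2) by simp
    obtain S0 where S0: "S0 \<subseteq> E" "card S0 = edge_connectivity V E ends" "\<not> connected_graph V (E - S0) ends"
      using kappa_ex[OF V2, of E ends] by blast
    have "\<not> connected_graph V (E' - S0 \<inter> E') ends"
    proof
      assume "connected_graph V (E' - S0 \<inter> E') ends"
      then have "connected_graph V (E - S0) ends" by (rule connected_mono) (use E'(1) in auto)
      then show False using S0(3) by simp
    qed
    then have "k \<le> card (S0 \<inter> E')" using kappa_le[OF V2, of "S0 \<inter> E'" E' ends] kE' by simp
    also have "\<dots> \<le> card S0"
    proof (rule card_mono)
      show "finite S0" using S0(1) finE by (rule finite_subset)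
    qed auto
    finally have "k \<le> edge_connectivity V E ends" using S0(2) by simp
    then show "edge_connectivity V E ends = k \<and> tree_packing V E ends = k" using t1 t2 t3 by simp
  qed
qed

end
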